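(* Let $Z$ be a reflection positive volume-dependent field theory, let $\Sigma$ be a nonempty closed $(n-1)$-manifold, and for each $\lambda\in\mathrm{Spec}(H_\Sigma)$ let $g_\lambda:\mathcal H^\lambda_\Sigma\to\mathbb C$ be linear. If $g=\sum_{\lambda\in\mathrm{Spec}(H_\Sigma)}g_\lambda\circ\pi_\lambda$ defines a continuous map $\check E_\Sigma\to\mathbb C$, then for all $t>0$ there exists $C>0$ such that $\|g_\lambda\|<Ce^{t\lambda}$ for all $\lambda\in\mathrm{Spec}(H_\Sigma)$.
   Context: A reflection positive volume-dependent field theory $Z$ (a nuclear, holomorphic, coherent symmetric monoidal functor from $n$-dimensional bordisms of germs equipped with complex densities of positive real part to nuclear pairs — continuous injective dense maps from nuclear dual Fréchet to nuclear Fréchet spaces — which is equivariant for reflection/conjugation and sends reflection-fixed objects to Hermitian nuclear pairs) assigns to each closed $(n-1)$-manifold $\Sigma$ (using a fixed translation-invariant density $\nu_\Sigma\wedge dt$ on $\Sigma\times\mathbb R$, $\nu_\Sigma$ positive of volume 1) a Hilbert space $\mathcal H_\Sigma$ and a self-adjoint operator $H_\Sigma$ with discrete spectrum bounded below and finite-dimensional eigenspaces $\mathcal H_\Sigma^\lambda$, such that cylinders $\Sigma\times I$ of complex volume $s$ act by $\exp(-sH_\Sigma)$. The Hermitian nuclear pair assigned to $\Sigma$ is $\check E_\Sigma\subset\mathcal H_\Sigma\subset\hat E_\Sigma$ with $\check E_\Sigma=\{(v_\lambda)\in\prod_{\lambda}\mathcal H^\lambda_\Sigma:\exists\tau\in\mathbb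 C_{>0},\ (e^{\tau\lambda}v_\lambda)\in\mathcal H_\Sigma\}$, carrying the colimit topology of copies of $\mathcal H_\Sigma$ under the maps $e^{-\tau H_\Sigma}$. $\pi_\lambda:\mathcal H_\Sigma\to\mathcal H^\lambda_\Sigma$ is the orthogonal projection (extended componentwise to families). *)

theory Defs
  imports "HOL-Analysis.Analysis"
begin

text \<open>Concrete model of the spectral data of H_Sigma: eigenvalue set Spec (a set of reals),
  eigenspace of eigenvalue l modelled isometrically as C^(d l), i.e. vectors nat => complex
  vanishing from index d l on, with the standard Hermitian norm.  The Hilbert space H_Sigma is
  the l2 direct sum of the eigenspaces.\<close>

type_synonym family = "real \<Rightarrow> nat \<Rightarrow> complex"

definition eigspace :: "nat \<Rightarrow> (nat \<Rightarrow> complex) set" where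
  "eigspace d = {v. \<forall>i\<ge>d. v i = 0}"

definition eignorm :: "nat \<Rightarrow> (nat \<Rightarrow> complex) \<Rightarrow> real" where
  "eignorm d v = sqrt (\<Sum>i<d. (cmod (v i))\<^sup>2)"

definition clinear_on :: "(nat \<Rightarrow> complex) set \<Rightarrow> ((nat \<Rightarrow> complex) \<Rightarrow> complex) \<Rightarrow> bool" where
  "clinear_on V f \<longleftrightarrow>
     (\<forall>x\<in>V. \<forall>y\<in>V. f (\<lambda>i. x i + y i) = f x + f y) \<and>
     (\<forall>c::complex. \<forall>x\<in>V. f (\<lambda>i. c * x i) = c * f x)"

definition opnorm :: "nat \<Rightarrow> ((nat \<Rightarrow> complex) \<Rightarrow> complex) \<Rightarrow> real" where
  "opnorm d f = Sup {cmod (f v) | v. v \<in> eigspace d \<and> eignorm d v \<le> 1}"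

definition prodfam :: "real set \<Rightarrow> (real \<Rightarrow> nat) \<Rightarrow> family set" where
  "prodfam Spec d = {v. (\<forall>l\<in>Spec. v l \<in> eigspace (d l)) \<and> (\<forall>l. l \<notin> Spec \<longrightarrow> v l = (\<lambda>_. 0))}"

definition hilb :: "real set \<Rightarrow> (real \<Rightarrow> nat) \<Rightarrow> family set" where
  "hilb Spec d = {v \<in> prodfam Spec d. (\<lambda>l. (eignorm (d l) (v l))\<^sup>2) summable_on Spec}"

definition hnorm :: "real set \<Rightarrow> (real \<Rightarrow> nat) \<Rightarrow> family \<Rightarrow> real" where
  "hnorm Spec d v = sqrt (\<Sum>\<^sub>\<infinity>l\<in>Spec. (eignorm (d l) (v l))\<^sup>2)"

definition hilb_top :: "real set \<Rightarrow> (real \<Rightarrow> nat) \<Rightarrow> family topology" where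
  "hilb_top Spec d = topology (\<lambda>S. S \<subseteq> hilb Spec d \<and>
     (\<forall>x\<in>S. \<exists>e>0. \<forall>y\<in>hilb Spec d. hnorm Spec d (\<lambda>l i. y l i - x l i) < e \<longrightarrow> y \<in> S))"

definition heat :: "complex \<Rightarrow> family \<Rightarrow> family" where
  "heat tau v = (\<lambda>l i. exp (- tau * complex_of_real l) * v l i)"

definition Echeck :: "real set \<Rightarrow> (real \<Rightarrow> nat) \<Rightarrow> family set" where
  "Echeck Spec d = {v \<in> prodfam Spec d. \<exists>tau. Re tau > 0 \<and> heat (- tau) v \<in> hilb Spec d}"

text \<open>Colimit (final) topology on Echeck with respect to the maps exp(-tau H) : H_Sigma -> Echeck.\<close>
definition Echeck_top :: "real set \<Rightarrow> (real \<Rightarrow> nat) \<Rightarrow> family topology" where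
  "Echeck_top Spec d = topology (\<lambda>U. U \<subseteq> Echeck Spec d \<and>
     (\<forall>tau. Re tau > 0 \<longrightarrow> openin (hilb_top Spec d) {w \<in> hilb Spec d. heat tau w \<in> U}))"

end

theory Submission
  imports Defs
begin

lemma single_infsum:
  fixes f :: "real \<Rightarrow> 'b::{comm_monoid_add, t2_space}"
  assumes "l \<in> S" "\<And>x. x \<in> S \<Longrightarrow> x \<noteq> l \<Longrightarrow> f x = 0"
  shows "infsum f S = f l" "f summable_on S"
proof -
  have "infsum f S = infsum f {l}"
    by (rule infsum_cong_neutral) (use assms in auto)
  then show "infsum f S = f l" by simp
  have "f summable_on S \<longleftrightarrow> f summable_on {l}"
    by (rule summable_on_cong_neutral) (use assms in auto)
  then show "f summable_on S" by simp
qed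

lemma istop_gen: "istopology (\<lambda>S. S \<subseteq> H \<and>
     (\<forall>x\<in>S. \<exists>e>0. \<forall>y\<in>H. N x y < (e::real) \<longrightarrow> y \<in> S))"
  unfolding istopology_def
proof (intro conjI allI impI ballI)
  fix S T
  assume S: "S \<subseteq> H \<and> (\<forall>x\<in>S. \<exists>e>0. \<forall>y\<in>H. N x y < e \<longrightarrow> y \<in> S)"
    and T: "T \<subseteq> H \<and> (\<forall>x\<in>T. \<exists>e>0. \<forall>y\<in>H. N x y < e \<longrightarrow> y \<in> T)"
  show "S \<inter> T \<subseteq> H" using S by auto
  fix x assume "x \<in> S \<inter> T"
  then obtain e1 e2 where "e1 > 0" "e2 > 0"
      "\<forall>y\<in>H. N x y < e1 \<longrightarrow> y \<in> S" "\<forall>y\<in>H. N x y < e2 \<longrightarrow> y \<in> T"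
    using S T by blast
  then show "\<exists>e>0. \<forall>y\<in>H. N x y < e \<longrightarrow> y \<in> S \<inter> T"
    by (intro exI[of _ "min e1 e2"]) auto
next
  fix K
  assume K: "\<forall>K\<in>K. K \<subseteq> H \<and> (\<forall>x\<in>K. \<exists>e>0. \<forall>y\<in>H. N x y < e \<longrightarrow> y \<in> K)"
  then show "\<Union>K \<subseteq> H" by blast
  fix x assume "x \<in> \<Union>K"
  then obtain A where A: "A \<in> K" "x \<in> A" by blast
  with K obtain e where "e > 0" "\<forall>y\<in>H. N x y < e \<longrightarrow> y \<in> A"
    by meson
  with A show "\<exists>e>0. \<forall>y\<in>H. N x y < e \<longrightarrow> y \<in> \<Union>K" by blast
qed

lemma istop_hilb: "istopology (\<lambda>S. S \<subseteq> hilb Spec d \<and>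
     (\<forall>x\<in>S. \<exists>e>0. \<forall>y\<in>hilb Spec d. hnorm Spec d (\<lambda>l i. y l i - x l i) < e \<longrightarrow> y \<in> S))"
  by (rule istop_gen[where N = "\<lambda>x y. hnorm Spec d (\<lambda>l i. y l i - x l i)"])

lemma openin_hilb: "openin (hilb_top Spec d) S \<longleftrightarrow> S \<subseteq> hilb Spec d \<and>
     (\<forall>x\<in>S. \<exists>e>0. \<forall>y\<in>hilb Spec d. hnorm Spec d (\<lambda>l i. y l i - x l i) < e \<longrightarrow> y \<in> S)"
  unfolding hilb_top_def using topology_inverse'[OF istop_hilb] by simp

lemma istop_E: "istopology (\<lambda>U. U \<subseteq> Echeck Spec d \<and>
     (\<forall>tau. Re tau > 0 \<longrightarrow> openin (hilb_top Spec d) {w \<in> hilb Spec d. heat tau w \<in> U}))"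
  unfolding istopology_def
proof (intro conjI allI impI ballI)
  fix S T :: "family set"
  fix tau :: complex
  assume S: "S \<subseteq> Echeck Spec d \<and>
     (\<forall>tau. Re tau > 0 \<longrightarrow> openin (hilb_top Spec d) {w \<in> hilb Spec d. heat tau w \<in> S})"
    and T: "T \<subseteq> Echeck Spec d \<and>
     (\<forall>tau. Re tau > 0 \<longrightarrow> openin (hilb_top Spec d) {w \<in> hilb Spec d. heat tau w \<in> T})"
  show "S \<inter> T \<subseteq> Echeck Spec d" using S by auto
  assume "Re tau > 0"
  then have "openin (hilb_top Spec d) ({w \<in> hilb Spec d. heat tau w \<in> S} \<inter> {w \<in> hilb Spec d. heat tau w \<in> T})"
    using S T by (intro openin_Int) auto
  moreover have "{w \<in> hilb Spec d. heat tau w \<in> S} \<inter> {w \<in> hilb Spec d. heat tau w \<in> T}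
      = {w \<in> hilb Spec d. heat tau w \<in> S \<inter> T}" by auto
  ultimately show "openin (hilb_top Spec d) {w \<in> hilb Spec d. heat tau w \<in> S \<inter> T}" by simp
next
  fix K :: "family set set"
  fix tau :: complex
  assume K: "\<forall>K\<in>K. K \<subseteq> Echeck Spec d \<and>
     (\<forall>tau. Re tau > 0 \<longrightarrow> openin (hilb_top Spec d) {w \<in> hilb Spec d. heat tau w \<in> K})"
  then show "\<Union>K \<subseteq> Echeck Spec d" by auto
  assume "Re tau > 0"
  then have "openin (hilb_top Spec d) (\<Union>((\<lambda>U. {w \<in> hilb Spec d. heat tau w \<in> U}) ` K))"
    using K by (intro openin_Union) auto
  moreover have "\<Union>((\<lambda>U. {w \<in> hilb Spec d. heat tau w \<in> U}) ` K) = {w \<in> hilb Spec d. heat tau w \<in> \<Union>K}"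
    by auto
  ultimately show "openin (hilb_top Spec d) {w \<in> hilb Spec d. heat tau w \<in> \<Union>K}" by simp
qed

lemma openin_E: "openin (Echeck_top Spec d) U \<longleftrightarrow> U \<subseteq> Echeck Spec d \<and>
     (\<forall>tau. Re tau > 0 \<longrightarrow> openin (hilb_top Spec d) {w \<in> hilb Spec d. heat tau w \<in> U})"
  unfolding Echeck_top_def using topology_inverse'[OF istop_E] by simp

lemma heat_hilb_E:
  assumes "w \<in> hilb Spec d" "Re tau > 0"
  shows "heat tau w \<in> Echeck Spec d"
proof -
  have "heat (- tau) (heat tau w) = w"
    unfolding heat_def by (simp add: mult.assoc[symmetric] exp_add[symmetric])
  moreover have "heat tau w \<in> prodfam Spec d"
    using assms(1) unfolding hilb_def prodfam_def eigspace_def heat_def by auto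
  ultimately show ?thesis using assms unfolding Echeck_def by auto
qed

lemma zero_hilb: "(\<lambda>_ _. 0) \<in> hilb Spec d"
  unfolding hilb_def prodfam_def eigspace_def eignorm_def by simp

lemma topspace_E: "(\<lambda>_ _. 0) \<in> topspace (Echeck_top Spec d)"
proof -
  have "openin (hilb_top Spec d) (hilb Spec d)"
    unfolding openin_hilb by (auto intro: exI[of _ 1])
  moreover have "\<And>tau. Re tau > 0 \<Longrightarrow> {w \<in> hilb Spec d. heat tau w \<in> Echeck Spec d} = hilb Spec d"
    using heat_hilb_E by auto
  ultimately have "openin (Echeck_top Spec d) (Echeck Spec d)"
    unfolding openin_E by simp
  moreover have "(\<lambda>_ _. 0) \<in> Echeck Spec d"
    using heat_hilb_E[OF zero_hilb, of 1] by (simp add: heat_def)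
  ultimately show ?thesis by (meson openin_subset subsetD)
qed

lemma g_zero:
  assumes "clinear_on (eigspace n) f"
  shows "f (\<lambda>_. 0) = 0"
proof -
  have z: "(\<lambda>_. 0) \<in> eigspace n" unfolding eigspace_def by simp
  have "\<forall>c. \<forall>x\<in>eigspace n. f (\<lambda>i. c * x i) = c * f x"
    using assms unfolding clinear_on_def by (rule conjunct2)
  from bspec[OF spec[OF this, of 0] z] show ?thesis by simp
qed

lemma eignorm_scale: "eignorm n (\<lambda>i. c * v i) = cmod c * eignorm n v"
proof -
  have "(\<Sum>i<n. (cmod (c * v i))\<^sup>2) = (cmod c)\<^sup>2 * (\<Sum>i<n. (cmod (v i))\<^sup>2)"
    by (simp add: norm_mult power_mult_distrib sum_distrib_left)
  then show ?thesis unfolding eignorm_def by (simp add: real_sqrt_mult)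
qed

theorem lemma3p41:
  fixes Spec :: "real set" and d :: "real \<Rightarrow> nat"
    and g :: "real \<Rightarrow> (nat \<Rightarrow> complex) \<Rightarrow> complex"
  assumes discrete: "\<forall>c. finite {l \<in> Spec. l \<le> c}"
    and dims: "\<forall>l\<in>Spec. d l > 0"
    and lin: "\<forall>l\<in>Spec. clinear_on (eigspace (d l)) (g l)"
    and conv: "\<forall>v\<in>Echeck Spec d. (\<lambda>l. g l (v l)) summable_on Spec"
    and cont: "continuous_map (Echeck_top Spec d) euclidean (\<lambda>v. \<Sum>\<^sub>\<infinity>l\<in>Spec. g l (v l))"
  shows "\<forall>t>0. \<exists>C>0. \<forall>l\<in>Spec. opnorm (d l) (g l) < C * exp (t * l)"
proof (intro allI impI)
  fix t :: real assume t: "t > 0"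
  define F where "F = (\<lambda>v. \<Sum>\<^sub>\<infinity>l\<in>Spec. g l (v l))"
  define U where "U = {v \<in> topspace (Echeck_top Spec d). F v \<in> ball 0 1}"
  have "openin (Echeck_top Spec d) U"
    unfolding U_def F_def
    by (rule openin_continuous_map_preimage[OF cont]) simp
  then have op: "openin (hilb_top Spec d) {w \<in> hilb Spec d. heat (of_real t) w \<in> U}"
    unfolding openin_E using t by simp
  moreover have F0: "F (\<lambda>_ _. 0) = 0"
  proof -
    have "(\<Sum>\<^sub>\<infinity>l\<in>Spec. g l (\<lambda>_. 0)) = (\<Sum>\<^sub>\<infinity>l\<in>Spec. (0::complex))"
      by (rule infsum_cong) (use lin g_zero in blast)
    then show ?thesis unfolding F_def by simp
  qed
  moreover have "heat (of_real t) (\<lambda>_ _. 0) = (\<lambda>_ _. 0)" by (simp add: heat_def)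
  ultimately have z0: "(\<lambda>_ _. 0) \<in> {w \<in> hilb Spec d. heat (of_real t) w \<in> U}"
    using zero_hilb topspace_E unfolding U_def by simp
  have "\<exists>e>0. \<forall>y\<in>hilb Spec d. hnorm Spec d (\<lambda>l i. y l i - (\<lambda>_ _. 0) l i) < e
      \<longrightarrow> y \<in> {w \<in> hilb Spec d. heat (of_real t) w \<in> U}"
    using bspec[OF conjunct2[OF op[unfolded openin_hilb]] z0] by simp
  then obtain e where e: "e > 0"
    "\<forall>y\<in>hilb Spec d. hnorm Spec d y < e \<longrightarrow> heat (of_real t) y \<in> U"
    by auto
  have bound: "cmod (g l v) \<le> 2 / e * exp (t * l)"
    if l: "l \<in> Spec" and v: "v \<in> eigspace (d l)" "eignorm (d l) v \<le> 1" for l v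
  proof -
    define c :: complex where "c = of_real (e / 2)"
    define w :: family where "w = (\<lambda>l' i. if l' = l then c * v i else 0)"
    have ev: "eignorm (d l) (\<lambda>i. c * v i) = e/2 * eignorm (d l) v"
      using e(1) unfolding eignorm_scale c_def norm_of_real by simp
    have w0: "\<And>l'. l' \<noteq> l \<Longrightarrow> w l' = (\<lambda>_. 0)" unfolding w_def by auto
    have wl: "w l = (\<lambda>i. c * v i)" unfolding w_def by simp
    have wp: "w \<in> prodfam Spec d"
      using v l unfolding prodfam_def eigspace_def w_def by auto
    have sumeq: "(\<lambda>l'. (eignorm (d l') (w l'))\<^sup>2) summable_on Spec"
         "(\<Sum>\<^sub>\<infinity>l'\<in>Spec. (eignorm (d l') (w l'))\<^sup>2) = (eignorm (d l) (w l))\<^sup>2"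
      using single_infsum[of l Spec "\<lambda>l'. (eignorm (d l') (w l'))\<^sup>2"] l w0
      by (auto simp: eignorm_def)
    have wh: "w \<in> hilb Spec d" using wp sumeq unfolding hilb_def by simp
    have "hnorm Spec d w = e/2 * eignorm (d l) v"
    proof -
      have "eignorm (d l) v \<ge> 0" unfolding eignorm_def by (simp add: sum_nonneg)
      then show ?thesis unfolding hnorm_def sumeq(2) wl ev using e(1)
        by simp
    qed
    also have "\<dots> < e" using v(2) e(1) by (smt (verit) field_sum_of_halves mult_left_le)
    finally have "heat (of_real t) w \<in> U" using e(2) wh by blast
    then have Fl: "cmod (F (heat (of_real t) w)) < 1" unfolding U_def by simp
    define a :: complex where "a = exp (- of_real t * of_real l) * c"
    have hw: "heat (of_real t) w l' = (if l' = l then (\<lambda>i. a * v i) else (\<lambda>_. 0))" for l'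
      unfolding heat_def w_def a_def by (auto simp: mult.assoc)
    have "F (heat (of_real t) w) = g l (\<lambda>i. a * v i)"
    proof -
      have "\<And>x. x \<in> Spec \<Longrightarrow> x \<noteq> l \<Longrightarrow> g x (heat (of_real t) w x) = 0"
        using hw g_zero[OF bspec[OF lin]] by simp
      from single_infsum(1)[of l Spec "\<lambda>l'. g l' (heat (of_real t) w l')", OF l this]
      show ?thesis unfolding F_def using hw by simp
    qed
    also have "\<dots> = a * g l v"
    proof -
      have "\<forall>c. \<forall>x\<in>eigspace (d l). g l (\<lambda>i. c * x i) = c * g l x"
        using lin l unfolding clinear_on_def by (meson conjunct2)
      from bspec[OF spec[OF this, of a] v(1)] show ?thesis .
    qed
    finally have "cmod (a * g l v) < 1" using Fl by simp
    moreover have "cmod a = exp (- t * l) * (e/2)"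
    proof -
      have "exp (- of_real t * of_real l) = (of_real (exp (- t * l)) :: complex)"
        by (simp add: exp_of_real[symmetric])
      then show ?thesis unfolding a_def c_def using e(1) by (simp add: norm_mult)
    qed
    ultimately have "exp (- t * l) * (e/2) * cmod (g l v) < 1" by (simp add: norm_mult)
    then have "cmod (g l v) < 1 / (exp (- t * l) * (e/2))"
      using e(1) by (simp add: field_simps)
    also have "\<dots> = 2 / e * exp (t * l)"
      by (simp add: exp_minus field_simps)
    finally show ?thesis by simp
  qed
  show "\<exists>C>0. \<forall>l\<in>Spec. opnorm (d l) (g l) < C * exp (t * l)"
  proof (intro exI[of _ "4 / e"] conjI ballI)
    show "4 / e > 0" using e(1) by simp
    fix l assume l: "l \<in> Spec"
    have "opnorm (d l) (g l) \<le> 2 / e * exp (t * l)"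
      unfolding opnorm_def
    proof (rule cSup_least)
      have "(\<lambda>_. 0) \<in> eigspace (d l)" "eignorm (d l) (\<lambda>_. 0) \<le> 1"
        by (auto simp: eigspace_def eignorm_def)
      then show "{cmod (g l v) |v. v \<in> eigspace (d l) \<and> eignorm (d l) v \<le> 1} \<noteq> {}" by blast
    next
      fix x assume "x \<in> {cmod (g l v) |v. v \<in> eigspace (d l) \<and> eignorm (d l) v \<le> 1}"
      then show "x \<le> 2 / e * exp (t * l)" using bound l by blast
    qed
    also have "\<dots> < 4 / e * exp (t * l)" using e(1) by (simp add: divide_strict_right_mono)
    finally show "opnorm (d l) (g l) < 4 / e * exp (t * l)" .
  qed
qed

end
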